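(* Let $\ell:\mathbb{R}\times Y\to\mathbb{R}$ be a loss function that is convex in its first argument. Let $A$ be a learning algorithm that on a dataset $S\in(X\times Y)^n$ outputs a function $A(S,\cdot):X\to\mathbb{R}$ and is uniform replace-one prediction stable with rate $\gamma$. Then for every $\epsilon>0$ there exists an $\epsilon$-differentially private prediction algorithm $M$ (with real-valued outputs) such that for every dataset $S\in(X\times Y)^n$ and every probability distribution $P$ over $X\times Y$: (1) if $\ell(\cdot,y)$ is $L_\ell$-Lipschitz for all $y\in Y$, then $\mathbb{E}_{(x,y)\sim P,\,M}[\ell(M(S,x),y)]\le \mathbb{E}_{(x,y)\sim P}[\ell(A(S,x),y)]+L_\ell\gamma/\epsilon$; (2) if $\ell(\cdot,y)$ is $\sigma$-smooth for all $y\in Y$, then $\mathbb{E}_{(x,y)\sim P,\,M}[\ell(M(S,x),y)]\le \mathbb{E}_{(x,y)\sim P}[\ell(A(S,x),y)]+\sigma\gamma^2/\epsilon^2$.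
   Context: $A$ is uniform replace-one (RO) prediction stable with rate $\gamma$ if for all datasets $S,S'\in(X\times Y)^n$ differing in a single element and every $x\in X$, $|A(S,x)-A(S',x)|\le\gamma$. A prediction algorithm $M$ takes $S$ and $x\in X$ and outputs a (possibly random) value $M(S,x)$; it is an $\epsilon$-differentially private prediction algorithm if for every $x$, for all $S,S'$ differing in a single element and every set $O$, $\Pr[M(S,x)\in O]\le e^{\epsilon}\Pr[M(S',x)\in O]$. A function $g:\mathbb{R}\to\mathbb{R}$ is $\sigma$-smooth if it is differentiable with $\sigma$-Lipschitz derivative. *)

theory Defs
  imports "HOL-Probability.Probability"
begin

definition ro_neighbors :: "nat \<Rightarrow> 'a list \<Rightarrow> 'a list \<Rightarrow> bool" where
  "ro_neighbors n S S' \<longleftrightarrow> length S = n \<and> length S' = n \<and>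
     (\<exists>i<n. \<exists>z. S' = S[i := z])"

definition uniform_RO_stable ::
  "nat \<Rightarrow> (('x \<times> 'y) list \<Rightarrow> 'x \<Rightarrow> real) \<Rightarrow> real \<Rightarrow> bool" where
  "uniform_RO_stable n A \<gamma> \<longleftrightarrow>
     (\<forall>S S' x. ro_neighbors n S S' \<longrightarrow> \<bar>A S x - A S' x\<bar> \<le> \<gamma>)"

definition prediction_algorithm ::
  "nat \<Rightarrow> (('x \<times> 'y) list \<Rightarrow> 'x \<Rightarrow> real measure) \<Rightarrow> bool" where
  "prediction_algorithm n M \<longleftrightarrow>
     (\<forall>S x. length S = n \<longrightarrow> prob_space (M S x) \<and> sets (M S x) = sets borel)"

definition dp_prediction ::
  "nat \<Rightarrow> real \<Rightarrow> (('x \<times> 'y) list \<Rightarrow> 'x \<Rightarrow> real measure) \<Rightarrow> bool" where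
  "dp_prediction n \<epsilon> M \<longleftrightarrow> prediction_algorithm n M \<and>
     (\<forall>x S S' E. ro_neighbors n S S' \<longrightarrow> E \<in> sets borel \<longrightarrow>
        measure (M S x) E \<le> exp \<epsilon> * measure (M S' x) E)"

definition smooth_with :: "real \<Rightarrow> (real \<Rightarrow> real) \<Rightarrow> bool" where
  "smooth_with \<sigma> g \<longleftrightarrow> (\<forall>z. g differentiable (at z)) \<and> \<sigma>-lipschitz_on UNIV (deriv g)"

end

theory Submission imports Defs begin
lemma smooth_bound:
  fixes g :: "real \<Rightarrow> real"
  assumes d: "\<forall>z. g differentiable (at z)" and l: "\<sigma>-lipschitz_on UNIV (deriv g)"
  shows "\<bar>g (a+t) - g a - deriv g a * t\<bar> \<le> \<sigma>/2 * t\<^sup>2"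
proof -
  have D: "\<And>z. (g has_real_derivative deriv g z) (at z)"
    using d DERIV_deriv_iff_real_differentiable by blast
  have L: "\<And>s. \<bar>deriv g (a+s) - deriv g a\<bar> \<le> \<sigma> * \<bar>s\<bar>"
    using l unfolding lipschitz_on_def dist_real_def by (metis UNIV_I add_diff_cancel_left')
  define h where "h s = g(a+s) - g a - deriv g a * s - \<sigma>/2 * s\<^sup>2" for s
  define h2 where "h2 s = g(a+s) - g a - deriv g a * s + \<sigma>/2 * s\<^sup>2" for s
  have Dh: "\<And>s. (h has_real_derivative (deriv g (a+s) - deriv g a - \<sigma> * s)) (at s)"
  proof -
    fix s
    have g1: "((\<lambda>s. g(a+s)) has_real_derivative deriv g (a+s)) (at s)"
      using D[of "a+s"] DERIV_shift[of g "deriv g (a+s)" s a] by (simp add: add.commute)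
    show "?thesis s" unfolding h_def
      by (rule derivative_eq_intros g1 refl | simp)+
  qed
  have Dh2: "\<And>s. (h2 has_real_derivative (deriv g (a+s) - deriv g a + \<sigma> * s)) (at s)"
  proof -
    fix s
    have g1: "((\<lambda>s. g(a+s)) has_real_derivative deriv g (a+s)) (at s)"
      using D[of "a+s"] DERIV_shift[of g "deriv g (a+s)" s a] by (simp add: add.commute)
    show "?thesis s" unfolding h2_def
      by (rule derivative_eq_intros g1 refl | simp)+
  qed
  have "h t \<le> 0 \<and> h2 t \<ge> 0"
  proof (cases "t \<ge> 0")
    case True
    have "h t \<le> h 0"
      apply (rule DERIV_nonpos_imp_nonincreasing[OF True])
      subgoal for x
      apply (rule exI, rule conjI, rule Dh) using L[of x] by (auto simp: abs_le_iff)
      done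
    moreover have "h2 0 \<le> h2 t"
      apply (rule DERIV_nonneg_imp_nondecreasing[OF True])
      subgoal for x
      apply (rule exI, rule conjI, rule Dh2) using L[of x] by (auto simp: abs_le_iff)
      done
    ultimately show ?thesis by (simp add: h_def h2_def)
  next
    case False
    hence F: "t \<le> 0" by simp
    have "h t \<le> h 0"
      apply (rule DERIV_nonneg_imp_nondecreasing[OF F])
      subgoal for x
      apply (rule exI, rule conjI, rule Dh) using L[of x] by (auto simp: abs_le_iff)
      done
    moreover have "h2 0 \<le> h2 t"
      apply (rule DERIV_nonpos_imp_nonincreasing[OF F])
      subgoal for x
      apply (rule exI, rule conjI, rule Dh2) using L[of x] by (auto simp: abs_le_iff)
      done
    ultimately show ?thesis by (simp add: h_def h2_def)
  qed
  then show ?thesis unfolding h_def h2_def abs_le_iff by linarith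
qed

definition lap :: "real \<Rightarrow> real \<Rightarrow> real" where
  "lap b t = exp (- \<bar>t\<bar> / b) / (2 * b)"

lemma lap_measurable[measurable]: "lap b \<in> borel_measurable borel"
  unfolding lap_def by measurable

lemma lap_nonneg: "0 < b \<Longrightarrow> 0 \<le> lap b t"
  unfolding lap_def by simp

lemma ed_moment:
  assumes b: "0 < b"
  shows "has_bochner_integral lborel (\<lambda>x. exponential_density (1/b) x * x^i) (fact i * b^i)"
proof (rule has_bochner_integral_nn_integral)
  show "(\<lambda>x. exponential_density (1/b) x * x^i) \<in> borel_measurable lborel" by simp
  show "AE x in lborel. 0 \<le> exponential_density (1/b) x * x^i"
    using b by (auto simp: exponential_density_def)
  show "(\<integral>\<^sup>+ x. ennreal (exponential_density (1/b) x * x^i) \<partial>lborel) = ennreal (fact i * b^i)"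
    using nn_integral_erlang_ith_moment[of "1/b" 0 i] b by (simp add: power_one_over)
  show "0 \<le> fact i * b^i" using b by simp
qed

lemma lap_split:
  assumes b: "0 < b" and gm[measurable]: "g \<in> borel_measurable borel"
    and i1: "integrable lborel (\<lambda>t. exponential_density (1/b) t * g t)"
    and i2: "integrable lborel (\<lambda>t. exponential_density (1/b) t * g (-t))"
  shows "integrable lborel (\<lambda>t. lap b t * g t) \<and>
    (\<integral>t. lap b t * g t \<partial>lborel) =
      ((\<integral>t. exponential_density (1/b) t * g t \<partial>lborel) + (\<integral>t. exponential_density (1/b) t * g (-t) \<partial>lborel)) / 2"
proof -
  let ?e = "exponential_density (1/b)"
  have AE: "AE t in lborel. lap b t * g t = (?e t * g t + ?e (-t) * g t) / 2"
    using AE_lborel_singleton[of 0]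
  proof (rule AE_mp, intro AE_I2 impI)
    fix t :: real assume "t \<noteq> 0"
    then show "lap b t * g t = (?e t * g t + ?e (-t) * g t) / 2"
      using b by (cases "t < 0") (auto simp: lap_def exponential_density_def field_simps)
  qed
  have i3: "integrable lborel (\<lambda>t. ?e (-t) * g t)"
    using lborel_integrable_real_affine_iff[of "-1" "\<lambda>t. ?e t * g (-t)" 0] i2 by simp
  have e3: "(\<integral>t. ?e (-t) * g t \<partial>lborel) = (\<integral>t. ?e t * g (-t) \<partial>lborel)"
    using lborel_integral_real_affine[of "-1" "\<lambda>t. ?e (-t) * g t" 0] by simp
  have ii: "integrable lborel (\<lambda>t. (?e t * g t + ?e (-t) * g t) / 2)"
    using i1 i3 by auto
  have "integrable lborel (\<lambda>t. lap b t * g t)"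
    using integrable_cong_AE[OF _ _ AE] ii by simp
  moreover have "(\<integral>t. lap b t * g t \<partial>lborel) = (\<integral>t. (?e t * g t + ?e (-t) * g t) / 2 \<partial>lborel)"
    by (rule integral_cong_AE[OF _ _ AE]; measurable)
  moreover have "\<dots> = ((\<integral>t. ?e t * g t \<partial>lborel) + (\<integral>t. ?e (-t) * g t \<partial>lborel)) / 2"
    using i1 i3 by simp
  ultimately show ?thesis using e3 by simp
qed

lemma lap_moments:
  assumes b: "0 < b"
  shows "integrable lborel (lap b)" "(\<integral>t. lap b t \<partial>lborel) = 1"
    "integrable lborel (\<lambda>t. lap b t * t)" "(\<integral>t. lap b t * t \<partial>lborel) = 0"
    "integrable lborel (\<lambda>t. lap b t * \<bar>t\<bar>)" "(\<integral>t. lap b t * \<bar>t\<bar> \<partial>lborel) = b"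
    "integrable lborel (\<lambda>t. lap b t * t\<^sup>2)" "(\<integral>t. lap b t * t\<^sup>2 \<partial>lborel) = 2 * b\<^sup>2"
proof -
  let ?e = "exponential_density (1/b)"
  have m0: "has_bochner_integral lborel (\<lambda>x. ?e x) 1" using ed_moment[OF b, of 0] by simp
  have m1: "has_bochner_integral lborel (\<lambda>x. ?e x * x) b" using ed_moment[OF b, of 1] by simp
  have m2: "has_bochner_integral lborel (\<lambda>x. ?e x * x\<^sup>2) (2 * b\<^sup>2)" using ed_moment[OF b, of 2]
    by (simp add: numeral_2_eq_2)
  have eabs: "\<And>x. ?e x * \<bar>x\<bar> = ?e x * x" "\<And>x. ?e x * \<bar>-x\<bar> = ?e x * x"
    by (auto simp: exponential_density_def)
  note S0 = lap_split[OF b, of "\<lambda>_. 1"]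
  note S1 = lap_split[OF b, of "\<lambda>t. t"]
  note Sa = lap_split[OF b, of "\<lambda>t. \<bar>t\<bar>"]
  note S2 = lap_split[OF b, of "\<lambda>t. t\<^sup>2"]
  show "integrable lborel (lap b)" "(\<integral>t. lap b t \<partial>lborel) = 1"
    using S0 m0 by (auto dest: has_bochner_integral_integrable simp: has_bochner_integral_iff)
  show "integrable lborel (\<lambda>t. lap b t * t)" "(\<integral>t. lap b t * t \<partial>lborel) = 0"
    using S1 m1 by (auto dest: has_bochner_integral_integrable simp: has_bochner_integral_iff)
  show "integrable lborel (\<lambda>t. lap b t * \<bar>t\<bar>)" "(\<integral>t. lap b t * \<bar>t\<bar> \<partial>lborel) = b"
    using Sa m1 by (auto dest: has_bochner_integral_integrable simp: has_bochner_integral_iff eabs)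
  show "integrable lborel (\<lambda>t. lap b t * t\<^sup>2)" "(\<integral>t. lap b t * t\<^sup>2 \<partial>lborel) = 2 * b\<^sup>2"
    using S2 m2 by (auto dest: has_bochner_integral_integrable simp: has_bochner_integral_iff)
qed

lemma lap_bound:
  assumes b: "0 < b" and gm[measurable]: "g \<in> borel_measurable borel"
    and bd: "\<And>t. \<bar>g (a+t) - g a - c*t\<bar> \<le> K*\<bar>t\<bar> + K2*t\<^sup>2"
  shows "integrable lborel (\<lambda>t. lap b t * g (a+t)) \<and>
    \<bar>(\<integral>t. lap b t * g (a+t) \<partial>lborel) - g a\<bar> \<le> K*b + K2*(2*b\<^sup>2)"
proof -
  note LM = lap_moments[OF b]
  define r where "r t = g (a+t) - g a - c*t" for t
  have rm[measurable]: "r \<in> borel_measurable borel" unfolding r_def by measurable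
  let ?m = "\<lambda>t. K*(lap b t*\<bar>t\<bar>) + K2*(lap b t * t\<^sup>2)"
  have maj: "integrable lborel ?m" using LM by auto
  have pt: "\<bar>lap b t * r t\<bar> \<le> ?m t" for t
  proof -
    have "\<bar>lap b t * r t\<bar> = lap b t * \<bar>r t\<bar>" using lap_nonneg[OF b] by (simp add: abs_mult)
    also have "\<dots> \<le> lap b t * (K*\<bar>t\<bar> + K2*t\<^sup>2)"
      using bd[of t] lap_nonneg[OF b, of t] unfolding r_def by (intro mult_left_mono) auto
    finally show ?thesis by (simp add: algebra_simps)
  qed
  have ir: "integrable lborel (\<lambda>t. lap b t * r t)"
    by (rule Bochner_Integration.integrable_bound[OF maj]) (use pt in \<open>auto intro!: AE_I2 order_trans[OF _ abs_ge_self]\<close>)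
  have eq: "(\<lambda>t. lap b t * g (a+t)) = (\<lambda>t. lap b t * r t + g a * lap b t + c * (lap b t * t))"
    by (auto simp: r_def algebra_simps)
  have i1: "integrable lborel (\<lambda>t. lap b t * g (a+t))"
    unfolding eq using ir LM by auto
  have "(\<integral>t. lap b t * g (a+t) \<partial>lborel) = (\<integral>t. lap b t * r t \<partial>lborel) + g a"
    unfolding eq using ir LM by simp
  moreover have "\<bar>\<integral>t. lap b t * r t \<partial>lborel\<bar> \<le> K*b + K2*(2*b\<^sup>2)"
  proof -
    have "\<bar>\<integral>t. lap b t * r t \<partial>lborel\<bar> \<le> (\<integral>t. \<bar>lap b t * r t\<bar> \<partial>lborel)"
      by (rule integral_abs_bound)
    also have "\<dots> \<le> (\<integral>t. ?m t \<partial>lborel)"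
      by (rule integral_mono) (use ir maj pt in auto)
    also have "\<dots> = K*b + K2*(2*b\<^sup>2)" using LM by simp
    finally show ?thesis .
  qed
  ultimately show ?thesis using i1 by simp
qed

definition lapM :: "real \<Rightarrow> real \<Rightarrow> real measure" where
  "lapM b a = density lborel (\<lambda>z. lap b (z - a))"

lemma lapM_sets: "sets (lapM b a) = sets borel"
  by (simp add: lapM_def)

lemma lapM_prob: assumes b: "0 < b" shows "prob_space (lapM b a)"
proof
  have "emeasure (lapM b a) (space (lapM b a)) = (\<integral>\<^sup>+ z. ennreal (lap b (z - a)) \<partial>lborel)"
    by (simp add: lapM_def emeasure_density)
  also have "\<dots> = (\<integral>\<^sup>+ t. ennreal (lap b t) \<partial>lborel)"
    using nn_integral_real_affine[of "\<lambda>z. ennreal (lap b (z - a))" 1 a] by simp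
  also have "\<dots> = ennreal (\<integral>t. lap b t \<partial>lborel)"
    using lap_moments[OF b] lap_nonneg[OF b] by (intro nn_integral_eq_integral) auto
  also have "\<dots> = 1" using lap_moments[OF b] by simp
  finally show "emeasure (lapM b a) (space (lapM b a)) = 1" .
qed

lemma lapM_integral:
  assumes b: "0 < b" and hm[measurable]: "h \<in> borel_measurable borel"
  shows "integrable (lapM b a) h \<longleftrightarrow> integrable lborel (\<lambda>t. lap b t * h (a+t))"
    "(\<integral>z. h z \<partial>lapM b a) = (\<integral>t. lap b t * h (a+t) \<partial>lborel)"
proof -
  have "integrable (lapM b a) h \<longleftrightarrow> integrable lborel (\<lambda>z. lap b (z - a) * h z)"
    unfolding lapM_def using lap_nonneg[OF b] by (subst integrable_density) auto
  also have "\<dots> \<longleftrightarrow> integrable lborel (\<lambda>t. lap b t * h (a+t))"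
    using lborel_integrable_real_affine_iff[of 1 "\<lambda>z. lap b (z - a) * h z" a] by simp
  finally show "integrable (lapM b a) h \<longleftrightarrow> integrable lborel (\<lambda>t. lap b t * h (a+t))" .
  have "(\<integral>z. h z \<partial>lapM b a) = (\<integral>z. lap b (z - a) * h z \<partial>lborel)"
    unfolding lapM_def using lap_nonneg[OF b] by (subst integral_density) auto
  also have "\<dots> = (\<integral>t. lap b t * h (a+t) \<partial>lborel)"
    using lborel_integral_real_affine[of 1 "\<lambda>z. lap b (z - a) * h z" a] by simp
  finally show "(\<integral>z. h z \<partial>lapM b a) = (\<integral>t. lap b t * h (a+t) \<partial>lborel)" .
qed

lemma lapM_dp:
  assumes b: "0 < b" and d: "\<bar>a - a'\<bar> \<le> \<epsilon> * b" and E: "E \<in> sets borel"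
  shows "measure (lapM b a) E \<le> exp \<epsilon> * measure (lapM b a') E"
proof -
  have pw: "lap b (z - a) \<le> exp \<epsilon> * lap b (z - a')" for z
  proof -
    have "- \<bar>z - a\<bar> / b \<le> \<epsilon> + - \<bar>z - a'\<bar> / b"
      using d b by (simp add: field_simps)
    hence "exp (- \<bar>z - a\<bar> / b) \<le> exp \<epsilon> * exp (- \<bar>z - a'\<bar> / b)"
      by (simp add: exp_add[symmetric])
    thus ?thesis unfolding lap_def using b by (simp add: divide_right_mono)
  qed
  interpret P1: prob_space "lapM b a" by (rule lapM_prob[OF b])
  interpret P2: prob_space "lapM b a'" by (rule lapM_prob[OF b])
  have "emeasure (lapM b a) E = (\<integral>\<^sup>+ z. ennreal (lap b (z - a)) * indicator E z \<partial>lborel)"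
    using E by (simp add: lapM_def emeasure_density)
  also have "\<dots> \<le> (\<integral>\<^sup>+ z. ennreal (exp \<epsilon>) * (ennreal (lap b (z - a')) * indicator E z) \<partial>lborel)"
    using pw lap_nonneg[OF b]
    by (intro nn_integral_mono) (auto simp: ennreal_mult[symmetric] split: split_indicator)
  also have "\<dots> = ennreal (exp \<epsilon>) * emeasure (lapM b a') E"
    using E by (simp add: lapM_def emeasure_density nn_integral_cmult)
  finally have "ennreal (measure (lapM b a) E) \<le> ennreal (exp \<epsilon> * measure (lapM b a') E)"
    by (simp add: P1.emeasure_eq_measure P2.emeasure_eq_measure ennreal_mult)
  thus ?thesis using measure_nonneg[of "lapM b a'" E] by (subst (asm) ennreal_le_iff) simp_all
qed

lemma floor_lim: "(\<lambda>k. real_of_int \<lfloor>real (Suc k) * x\<rfloor> / real (Suc k)) \<longlonglongrightarrow> x"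
proof (rule tendsto_sandwich[where f="\<lambda>k. x - 1 / real (Suc k)" and h="\<lambda>k. x"])
  show "\<forall>\<^sub>F k in sequentially. x - 1 / real (Suc k) \<le> real_of_int \<lfloor>real (Suc k) * x\<rfloor> / real (Suc k)"
  proof (intro always_eventually allI)
    fix k
    have "real (Suc k) * x - 1 \<le> real_of_int \<lfloor>real (Suc k) * x\<rfloor>" by linarith
    hence "(real (Suc k) * x - 1) / real (Suc k) \<le> real_of_int \<lfloor>real (Suc k) * x\<rfloor> / real (Suc k)"
      by (rule divide_right_mono) simp
    moreover have "(real (Suc k) * x - 1) / real (Suc k) = x - 1 / real (Suc k)"
      by (simp add: diff_divide_distrib)
    ultimately show "x - 1 / real (Suc k) \<le> real_of_int \<lfloor>real (Suc k) * x\<rfloor> / real (Suc k)"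
      by simp
  qed
  show "\<forall>\<^sub>F k in sequentially. real_of_int \<lfloor>real (Suc k) * x\<rfloor> / real (Suc k) \<le> x"
  proof (intro always_eventually allI)
    fix k
    have "real_of_int \<lfloor>real (Suc k) * x\<rfloor> \<le> real (Suc k) * x" by linarith
    hence "real_of_int \<lfloor>real (Suc k) * x\<rfloor> / real (Suc k) \<le> real (Suc k) * x / real (Suc k)"
      by (rule divide_right_mono) simp
    thus "real_of_int \<lfloor>real (Suc k) * x\<rfloor> / real (Suc k) \<le> x"
      by simp
  qed
  have "(\<lambda>k. 1 / real (Suc k)) \<longlonglongrightarrow> 0" using LIMSEQ_inverse_real_of_nat by (simp add: inverse_eq_divide)
  thus "(\<lambda>k. x - 1 / real (Suc k)) \<longlonglongrightarrow> x" using tendsto_diff[of "\<lambda>_. x" x] by force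
qed simp

lemma meas_shift:
  fixes f :: "real \<Rightarrow> 'a \<Rightarrow> real"
  assumes fm: "\<And>z. f z \<in> borel_measurable M" and fc: "\<And>p. continuous_on UNIV (\<lambda>z. f z p)"
    and um[measurable]: "u \<in> borel_measurable M"
  shows "(\<lambda>q. f (u (fst q) + snd q) (fst q)) \<in> borel_measurable (M \<Otimes>\<^sub>M lborel)"
proof (rule borel_measurable_LIMSEQ_real)
  define h where "h k q = f (real_of_int \<lfloor>real (Suc k) * (u (fst q) + snd q)\<rfloor> / real (Suc k)) (fst q)" for k q
  show "h k \<in> borel_measurable (M \<Otimes>\<^sub>M lborel)" for k
    unfolding h_def
  proof (rule measurable_compose_countable[where f="\<lambda>i q. f (real_of_int i / real (Suc k)) (fst q)"])
    show "(\<lambda>q. f (real_of_int i / real (Suc k)) (fst q)) \<in> borel_measurable (M \<Otimes>\<^sub>M lborel)" for i :: int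
      by (rule measurable_compose[OF measurable_fst fm])
    show "(\<lambda>q. \<lfloor>real (Suc k) * (u (fst q) + snd q)\<rfloor>) \<in> measurable (M \<Otimes>\<^sub>M lborel) (count_space UNIV)"
      by measurable
  qed
  show "(\<lambda>k. h k q) \<longlonglongrightarrow> f (u (fst q) + snd q) (fst q)" for q
  proof -
    have "isCont (\<lambda>z. f z (fst q)) (u (fst q) + snd q)"
      using fc[of "fst q"] by (simp add: continuous_on_eq_continuous_at)
    then show ?thesis unfolding h_def
      by (rule isCont_tendsto_compose[OF _ floor_lim])
  qed
qed


lemma return_integrable:
  fixes f :: "real \<Rightarrow> real"
  assumes "f \<in> borel_measurable borel"
  shows "integrable (return borel a) f"
  using assms by (simp add: integrable_iff_bounded nn_integral_return)

lemma finish: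
  fixes loss :: "real \<Rightarrow> 'y \<Rightarrow> real" and u :: "'x \<Rightarrow> real" and P :: "('x \<times> 'y) measure"
  assumes b: "0 < b" and cont: "\<forall>y. continuous_on UNIV (\<lambda>z. loss z y)"
    and P: "prob_space P" and um: "(\<lambda>p. u (fst p)) \<in> borel_measurable P"
    and lm: "\<forall>z. (\<lambda>p. loss z (snd p)) \<in> borel_measurable P"
    and int: "integrable P (\<lambda>p. loss (u (fst p)) (snd p))"
    and bd: "\<forall>a y. integrable lborel (\<lambda>t. lap b t * loss (a+t) y) \<and>
       \<bar>(\<integral>t. lap b t * loss (a+t) y \<partial>lborel) - loss a y\<bar> \<le> C"
  shows "(\<forall>x y. integrable (lapM b (u x)) (\<lambda>z. loss z y)) \<and>
    integrable P (\<lambda>p. \<integral>z. loss z (snd p) \<partial>lapM b (u (fst p))) \<and>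
    (\<integral>p. (\<integral>z. loss z (snd p) \<partial>lapM b (u (fst p))) \<partial>P) \<le> (\<integral>p. loss (u (fst p)) (snd p) \<partial>P) + C"
proof -
  interpret P: prob_space P by (rule P)
  have lb: "(\<lambda>z. loss z y) \<in> borel_measurable borel" for y
    using cont by (simp add: borel_measurable_continuous_onI)
  have I1: "\<forall>x y. integrable (lapM b (u x)) (\<lambda>z. loss z y)"
    using bd lapM_integral(1)[OF b lb] by blast
  define F where "F p = (\<integral>t. lap b t * loss (u (fst p) + t) (snd p) \<partial>lborel)" for p
  have Feq: "(\<lambda>p. \<integral>z. loss z (snd p) \<partial>lapM b (u (fst p))) = F"
    unfolding F_def using lapM_integral(2)[OF b lb] by auto
  have jm: "(\<lambda>q. loss (u (fst (fst q)) + snd q) (snd (fst q))) \<in> borel_measurable (P \<Otimes>\<^sub>M lborel)"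
    using meas_shift[where f="\<lambda>z p. loss z (snd p)" and u="\<lambda>p. u (fst p)" and M=P] lm cont um
    by blast
  have jm2: "case_prod (\<lambda>p t. lap b t * loss (u (fst p) + t) (snd p)) \<in> borel_measurable (P \<Otimes>\<^sub>M lborel)"
  proof -
    have "(\<lambda>q. lap b (snd q) * loss (u (fst (fst q)) + snd q) (snd (fst q))) \<in> borel_measurable (P \<Otimes>\<^sub>M lborel)"
      using jm by measurable
    thus ?thesis by (simp add: case_prod_beta')
  qed
  have Fm: "F \<in> borel_measurable P"
    unfolding F_def by (rule lborel.borel_measurable_lebesgue_integral[OF jm2])
  have Lm: "(\<lambda>p. loss (u (fst p)) (snd p)) \<in> borel_measurable P"
    using int by (rule borel_measurable_integrable)
  have D: "\<bar>F p - loss (u (fst p)) (snd p)\<bar> \<le> C" for p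
    using bd unfolding F_def by blast
  have iD: "integrable P (\<lambda>p. F p - loss (u (fst p)) (snd p))"
    by (rule P.integrable_const_bound[where B=C]) (use D Fm Lm in auto)
  have FF: "F = (\<lambda>p. (F p - loss (u (fst p)) (snd p)) + loss (u (fst p)) (snd p))" by auto
  have iF: "integrable P F" using Bochner_Integration.integrable_add[OF iD int] by simp
  have "(\<integral>p. F p \<partial>P) \<le> (\<integral>p. loss (u (fst p)) (snd p) + C \<partial>P)"
  proof (rule integral_mono)
    show "integrable P F" by (rule iF)
    show "integrable P (\<lambda>p. loss (u (fst p)) (snd p) + C)" using int by simp
    fix p show "F p \<le> loss (u (fst p)) (snd p) + C" using D[of p] by (simp add: abs_le_iff)
  qed
  also have "\<dots> = (\<integral>p. loss (u (fst p)) (snd p) \<partial>P) + C"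
    using int by (simp add: P.prob_space)
  finally show ?thesis using I1 iF unfolding Feq by simp
qed

theorem lemma14:
  fixes loss :: "real \<Rightarrow> 'y \<Rightarrow> real"
    and A :: "('x \<times> 'y) list \<Rightarrow> 'x \<Rightarrow> real"
    and n :: nat and \<gamma> \<epsilon> :: real
  assumes convex: "\<forall>y. convex_on UNIV (\<lambda>z. loss z y)"
    and stable: "uniform_RO_stable n A \<gamma>"
    and gamma_nonneg: "0 \<le> \<gamma>"
    and eps_pos: "\<epsilon> > 0"
  shows "\<exists>M :: ('x \<times> 'y) list \<Rightarrow> 'x \<Rightarrow> real measure.
    dp_prediction n \<epsilon> M \<and>
    (\<forall>S (P :: ('x \<times> 'y) measure).
       length S = n \<and> prob_space P \<and>
       (\<lambda>p. A S (fst p)) \<in> borel_measurable P \<and>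
       (\<forall>z. (\<lambda>p. loss z (snd p)) \<in> borel_measurable P) \<and>
       integrable P (\<lambda>p. loss (A S (fst p)) (snd p))
     \<longrightarrow>
       (\<forall>L. (\<forall>y. L-lipschitz_on UNIV (\<lambda>z. loss z y)) \<longrightarrow>
          (\<forall>x y. integrable (M S x) (\<lambda>z. loss z y)) \<and>
          integrable P (\<lambda>p. \<integral>z. loss z (snd p) \<partial>(M S (fst p))) \<and>
          (\<integral>p. (\<integral>z. loss z (snd p) \<partial>(M S (fst p))) \<partial>P)
            \<le> (\<integral>p. loss (A S (fst p)) (snd p) \<partial>P) + L * \<gamma> / \<epsilon>) \<and>
       (\<forall>\<sigma>. (\<forall>y. smooth_with \<sigma> (\<lambda>z. loss z y)) \<longrightarrow>
          (\<forall>x y. integrable (M S x) (\<lambda>z. loss z y)) \<and>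
          integrable P (\<lambda>p. \<integral>z. loss z (snd p) \<partial>(M S (fst p))) \<and>
          (\<integral>p. (\<integral>z. loss z (snd p) \<partial>(M S (fst p))) \<partial>P)
            \<le> (\<integral>p. loss (A S (fst p)) (snd p) \<partial>P) + \<sigma> * \<gamma>\<^sup>2 / \<epsilon>\<^sup>2))"
proof -
  have cont: "\<forall>y. continuous_on UNIV (\<lambda>z. loss z y)"
    using convex convex_on_continuous[OF open_UNIV] by blast
  have lb: "(\<lambda>z. loss z y) \<in> borel_measurable borel" for y
    using cont by (simp add: borel_measurable_continuous_onI)
  have stab: "\<And>S S' x. ro_neighbors n S S' \<Longrightarrow> \<bar>A S x - A S' x\<bar> \<le> \<gamma>"
    using stable unfolding uniform_RO_stable_def by blast
  show ?thesis
  proof (cases "\<gamma> = 0")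
    case True
    let ?M = "\<lambda>(S :: ('x \<times> 'y) list) x. return borel (A S x)"
    have dp: "dp_prediction n \<epsilon> ?M"
      unfolding dp_prediction_def prediction_algorithm_def
    proof (intro conjI allI impI)
      fix S :: "('x \<times> 'y) list" and x
      show "prob_space (?M S x)" by (simp add: prob_space_return)
      show "sets (?M S x) = sets borel" by simp
    next
      fix x and S S' :: "('x \<times> 'y) list" and E :: "real set"
      assume "ro_neighbors n S S'" "E \<in> sets (borel :: real measure)"
      hence "A S x = A S' x" using stab[of S S' x] True by simp
      moreover have "measure (?M S' x) E \<le> exp \<epsilon> * measure (?M S' x) E"
        using mult_right_mono[of 1 "exp \<epsilon>" "measure (?M S' x) E"] measure_nonneg[of "?M S' x" E] eps_pos by simp
      ultimately show "measure (?M S x) E \<le> exp \<epsilon> * measure (?M S' x) E" by simp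
    qed
    have ie: "\<And>S p. (\<integral>z. loss z (snd p) \<partial>(?M S (fst p))) = loss (A S (fst p)) (snd p)"
      using lb by (simp add: integral_return)
    have ri: "\<And>S x y. integrable (?M S x) (\<lambda>z. loss z y)"
      using lb return_integrable by blast
    show ?thesis
    proof (rule exI[of _ ?M], rule conjI[OF dp], intro allI impI, rule conjI)
      fix S :: "('x \<times> 'y) list" and P :: "('x \<times> 'y) measure"
      assume H: "length S = n \<and> prob_space P \<and> (\<lambda>p. A S (fst p)) \<in> borel_measurable P \<and>
       (\<forall>z. (\<lambda>p. loss z (snd p)) \<in> borel_measurable P) \<and>
       integrable P (\<lambda>p. loss (A S (fst p)) (snd p))"
      have G: "(\<forall>x y. integrable (?M S x) (\<lambda>z. loss z y)) \<and>
          integrable P (\<lambda>p. \<integral>z. loss z (snd p) \<partial>(?M S (fst p))) \<and>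
          (\<integral>p. (\<integral>z. loss z (snd p) \<partial>(?M S (fst p))) \<partial>P)
            \<le> (\<integral>p. loss (A S (fst p)) (snd p) \<partial>P) + 0"
        unfolding ie using ri H by simp
      show "\<forall>L. (\<forall>y. L-lipschitz_on UNIV (\<lambda>z. loss z y)) \<longrightarrow>
          (\<forall>x y. integrable (?M S x) (\<lambda>z. loss z y)) \<and>
          integrable P (\<lambda>p. \<integral>z. loss z (snd p) \<partial>(?M S (fst p))) \<and>
          (\<integral>p. (\<integral>z. loss z (snd p) \<partial>(?M S (fst p))) \<partial>P)
            \<le> (\<integral>p. loss (A S (fst p)) (snd p) \<partial>P) + L * \<gamma> / \<epsilon>"
        using G True by simp
      show "\<forall>\<sigma>. (\<forall>y. smooth_with \<sigma> (\<lambda>z. loss z y)) \<longrightarrow>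
          (\<forall>x y. integrable (?M S x) (\<lambda>z. loss z y)) \<and>
          integrable P (\<lambda>p. \<integral>z. loss z (snd p) \<partial>(?M S (fst p))) \<and>
          (\<integral>p. (\<integral>z. loss z (snd p) \<partial>(?M S (fst p))) \<partial>P)
            \<le> (\<integral>p. loss (A S (fst p)) (snd p) \<partial>P) + \<sigma> * \<gamma>\<^sup>2 / \<epsilon>\<^sup>2"
        using G True by simp
    qed
  next
    case False
    define b where "b = \<gamma> / \<epsilon>"
    have b: "0 < b" using False gamma_nonneg eps_pos by (simp add: b_def)
    let ?M = "\<lambda>(S :: ('x \<times> 'y) list) x. lapM b (A S x)"
    have dp: "dp_prediction n \<epsilon> ?M"
      unfolding dp_prediction_def prediction_algorithm_def
    proof (intro conjI allI impI)
      fix S :: "('x \<times> 'y) list" and x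
      show "prob_space (?M S x)" by (rule lapM_prob[OF b])
      show "sets (?M S x) = sets borel" by (rule lapM_sets)
    next
      fix x and S S' :: "('x \<times> 'y) list" and E :: "real set"
      assume "ro_neighbors n S S'" "E \<in> sets (borel :: real measure)"
      moreover have "\<epsilon> * b = \<gamma>" using eps_pos by (simp add: b_def)
      ultimately show "measure (?M S x) E \<le> exp \<epsilon> * measure (?M S' x) E"
        using stab[of S S' x] by (intro lapM_dp[OF b]) auto
    qed
    show ?thesis
    proof (rule exI[of _ ?M], rule conjI[OF dp], intro allI impI, rule conjI)
      fix S :: "('x \<times> 'y) list" and P :: "('x \<times> 'y) measure"
      assume H: "length S = n \<and> prob_space P \<and> (\<lambda>p. A S (fst p)) \<in> borel_measurable P \<and>
       (\<forall>z. (\<lambda>p. loss z (snd p)) \<in> borel_measurable P) \<and>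
       integrable P (\<lambda>p. loss (A S (fst p)) (snd p))"
      note fin = finish[OF b cont, of P "A S"]
      show "\<forall>L. (\<forall>y. L-lipschitz_on UNIV (\<lambda>z. loss z y)) \<longrightarrow>
          (\<forall>x y. integrable (?M S x) (\<lambda>z. loss z y)) \<and>
          integrable P (\<lambda>p. \<integral>z. loss z (snd p) \<partial>(?M S (fst p))) \<and>
          (\<integral>p. (\<integral>z. loss z (snd p) \<partial>(?M S (fst p))) \<partial>P)
            \<le> (\<integral>p. loss (A S (fst p)) (snd p) \<partial>P) + L * \<gamma> / \<epsilon>"
      proof (intro allI impI)
        fix L assume Lip: "\<forall>y. L-lipschitz_on UNIV (\<lambda>z. loss z y)"
        have "\<bar>loss (a+t) y - loss a y - 0*t\<bar> \<le> L*\<bar>t\<bar> + 0*t\<^sup>2" for a t y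
        proof -
          have "\<bar>loss (a+t) y - loss a y\<bar> \<le> L * \<bar>(a+t) - a\<bar>"
            using Lip unfolding lipschitz_on_def dist_real_def by blast
          thus ?thesis by simp
        qed
        hence "integrable lborel (\<lambda>t. lap b t * loss (a+t) y) \<and>
          \<bar>(\<integral>t. lap b t * loss (a+t) y \<partial>lborel) - loss a y\<bar> \<le> L * b + 0 * (2 * b\<^sup>2)" for a y
          by (intro lap_bound[OF b lb])
        hence bd: "\<forall>a y. integrable lborel (\<lambda>t. lap b t * loss (a+t) y) \<and>
          \<bar>(\<integral>t. lap b t * loss (a+t) y \<partial>lborel) - loss a y\<bar> \<le> L * b"
          by simp
        have "L * b = L * \<gamma> / \<epsilon>" by (simp add: b_def)
        thus "(\<forall>x y. integrable (?M S x) (\<lambda>z. loss z y)) \<and>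
          integrable P (\<lambda>p. \<integral>z. loss z (snd p) \<partial>(?M S (fst p))) \<and>
          (\<integral>p. (\<integral>z. loss z (snd p) \<partial>(?M S (fst p))) \<partial>P)
            \<le> (\<integral>p. loss (A S (fst p)) (snd p) \<partial>P) + L * \<gamma> / \<epsilon>"
          using fin[of "L * b"] H bd by simp
      qed
      show "\<forall>\<sigma>. (\<forall>y. smooth_with \<sigma> (\<lambda>z. loss z y)) \<longrightarrow>
          (\<forall>x y. integrable (?M S x) (\<lambda>z. loss z y)) \<and>
          integrable P (\<lambda>p. \<integral>z. loss z (snd p) \<partial>(?M S (fst p))) \<and>
          (\<integral>p. (\<integral>z. loss z (snd p) \<partial>(?M S (fst p))) \<partial>P)
            \<le> (\<integral>p. loss (A S (fst p)) (snd p) \<partial>P) + \<sigma> * \<gamma>\<^sup>2 / \<epsilon>\<^sup>2"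
      proof (intro allI impI)
        fix \<sigma> assume Sm: "\<forall>y. smooth_with \<sigma> (\<lambda>z. loss z y)"
        have "\<bar>loss (a+t) y - loss a y - deriv (\<lambda>z. loss z y) a * t\<bar> \<le> 0*\<bar>t\<bar> + \<sigma>/2*t\<^sup>2" for a t y
          using smooth_bound[of "\<lambda>z. loss z y" \<sigma> a t] Sm unfolding smooth_with_def by simp
        hence "integrable lborel (\<lambda>t. lap b t * loss (a+t) y) \<and>
          \<bar>(\<integral>t. lap b t * loss (a+t) y \<partial>lborel) - loss a y\<bar> \<le> 0 * b + \<sigma>/2 * (2 * b\<^sup>2)" for a y
          by (intro lap_bound[OF b lb])
        hence bd: "\<forall>a y. integrable lborel (\<lambda>t. lap b t * loss (a+t) y) \<and>
          \<bar>(\<integral>t. lap b t * loss (a+t) y \<partial>lborel) - loss a y\<bar> \<le> \<sigma> * \<gamma>\<^sup>2 / \<epsilon>\<^sup>2"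
          by (simp add: b_def power_divide)
        thus "(\<forall>x y. integrable (?M S x) (\<lambda>z. loss z y)) \<and>
          integrable P (\<lambda>p. \<integral>z. loss z (snd p) \<partial>(?M S (fst p))) \<and>
          (\<integral>p. (\<integral>z. loss z (snd p) \<partial>(?M S (fst p))) \<partial>P)
            \<le> (\<integral>p. loss (A S (fst p)) (snd p) \<partial>P) + \<sigma> * \<gamma>\<^sup>2 / \<epsilon>\<^sup>2"
          using fin[of "\<sigma> * \<gamma>\<^sup>2 / \<epsilon>\<^sup>2"] H by simp
      qed
    qed
  qed
qed

end
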